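(* For every real $r\ge1$ and every $x\in\mathbb{R}$, \[ f_r(x)\ge 2^{1-r}\sum_{m\ge0}s_m(x)^r, \] with equality when $x=\tfrac12$.
   Context: For $y\in\mathbb{R}$ let $\operatorname{sinc}(y)=\frac{\sin y}{y}$ for $y\neq0$ and $\operatorname{sinc}(0)=1$, and let $h(y)=\operatorname{sinc}^2(\pi y)$. For $r\ge1$, $f_r(x)=\sum_{m\in\mathbb{Z}}h(x+m)^r$, and for integers $m\ge0$, $s_m(x)=h(x+m)+h(x-(m+1))$. *)

theory Defs
  imports "HOL-Analysis.Analysis"
begin

definition sinc :: "real \<Rightarrow> real" where
  "sinc y = (if y = 0 then 1 else sin y / y)"

definition h :: "real \<Rightarrow> real" where
  "h y = (sinc (pi * y))\<^sup>2"

definition f :: "real \<Rightarrow> real \<Rightarrow> real" where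
  "f r x = (\<Sum>\<^sub>\<infinity>m::int. h (x + of_int m) powr r)"

definition s :: "nat \<Rightarrow> real \<Rightarrow> real" where
  "s m x = h (x + real m) + h (x - (real m + 1))"

end

theory Submission
  imports Defs "HOL-Real_Asymp.Real_Asymp"
begin

lemma h_nonneg: "0 \<le> h y" unfolding h_def by simp

lemma h_le1: "h y \<le> 1"
proof -
  have "\<bar>sinc y'\<bar> \<le> 1" for y'
    unfolding sinc_def using abs_sin_x_le_abs_x[of y']
    by (auto simp: abs_divide divide_le_eq_1)
  then show ?thesis unfolding h_def
    by (metis abs_le_square_iff abs_one one_power2)
qed

lemma h_even: "h (- y) = h y"
  unfolding h_def sinc_def by auto

lemma h_bound: assumes "y \<noteq> 0" shows "h y \<le> 1 / y\<^sup>2"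
proof -
  have p: "pi * y \<noteq> 0" using assms by simp
  have "h y = (sin (pi*y))\<^sup>2 / (pi*y)\<^sup>2" unfolding h_def sinc_def using p
    by (simp add: power_divide)
  also have "\<dots> \<le> 1 / (pi*y)\<^sup>2"
    by (intro divide_right_mono) (auto simp: abs_square_le_1)
  also have "\<dots> \<le> 1 / y\<^sup>2"
  proof -
    have "y\<^sup>2 \<le> (pi*y)\<^sup>2" using pi_gt3 assms
      by (simp add: power_mult_distrib mult_le_cancel_right1)
    then show ?thesis using assms by (intro divide_left_mono) auto
  qed
  finally show ?thesis .
qed

lemma hr_le: assumes "r \<ge> 1" shows "h y powr r \<le> h y"
  using powr_mono'[OF assms h_nonneg h_le1, of y] h_nonneg[of y] by simp

lemma h_summable_shift:
  assumes "r \<ge> 1"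
  shows "summable (\<lambda>n::nat. h (c + real n) powr r)"
proof (rule summable_comparison_test_ev)
  show "summable (\<lambda>n::nat. 4 * inverse (real n ^ 2))"
    by (intro summable_mult inverse_power_summable) auto
  have "eventually (\<lambda>n::nat. real n \<ge> 2 * \<bar>c\<bar> + 1) sequentially"
    by real_asymp
  then show "eventually (\<lambda>n::nat. norm (h (c + real n) powr r) \<le> 4 * inverse (real n ^ 2)) sequentially"
  proof eventually_elim
    case (elim n)
    have n0: "real n > 0" using elim by linarith
    have ge: "c + real n \<ge> real n / 2" using elim by linarith
    have pos: "c + real n > 0" using ge n0 by linarith
    have "norm (h (c + real n) powr r) = h (c + real n) powr r" by simp
    also have "\<dots> \<le> h (c + real n)" by (rule hr_le[OF assms])
    also have "\<dots> \<le> 1 / (c + real n)\<^sup>2" using pos by (intro h_bound) auto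
    also have "\<dots> \<le> 1 / (real n / 2)\<^sup>2"
      using ge n0 by (intro divide_left_mono power_mono) auto
    also have "\<dots> = 4 * inverse (real n ^ 2)" by (simp add: field_simps power2_eq_square)
    finally show ?case .
  qed
qed

lemma power_mean2:
  fixes a b r :: real
  assumes "a \<ge> 0" "b \<ge> 0" "r \<ge> 1"
  shows "2 powr (1 - r) * (a + b) powr r \<le> a powr r + b powr r"
proof -
  have c: "2 powr (1 - r) \<le> 1" using assms powr_mono[of "1 - r" 0 2] by simp
  consider "a = 0" | "b = 0" | "a > 0 \<and> b > 0" using assms by linarith
  then show ?thesis
  proof cases
    case 1
    then show ?thesis using c by (simp add: mult_left_le_one_le)
  next
    case 2
    then show ?thesis using c by (simp add: mult_left_le_one_le)
  next
    case 3
    have "((1 - 1/2) *\<^sub>R a + (1/2) *\<^sub>R b) powr r \<le> (1 - 1/2) * a powr r + (1/2) * b powr r"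
      using 3 by (intro convex_onD[OF powr_convex[OF assms(3)]]) auto
    then have "((a + b) / 2) powr r \<le> (a powr r + b powr r) / 2" by (simp add: field_simps)
    moreover have "2 powr (1 - r) * (a + b) powr r = 2 * ((a + b) / 2) powr r"
    proof -
      have P: "2 powr r > (0::real)" by simp
      have "((a + b) / 2) powr r = (a + b) powr r / 2 powr r"
        using 3 by (simp add: powr_divide)
      moreover have "2 powr (1 - r) = 2 / 2 powr r" by (simp add: powr_diff)
      ultimately show ?thesis using P by simp
    qed
    ultimately show ?thesis by simp
  qed
qed

lemma split_int:
  fixes g :: "int \<Rightarrow> real"
  assumes "summable (\<lambda>n. g (int n))" "summable (\<lambda>n. g (- int n - 1))"
    "\<And>m. g m \<ge> 0"
  shows "infsum g UNIV = (\<Sum>\<^sub>\<infinity>n::nat. g (int n) + g (- int n - 1))"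
    "(\<lambda>n. g (int n)) summable_on UNIV" "(\<lambda>n. g (- int n - 1)) summable_on UNIV"
proof -
  have U: "(UNIV :: int set) = range int \<union> range (\<lambda>n. - int n - 1)"
  proof -
    have "x \<in> range int \<union> range (\<lambda>n. - int n - 1)" for x :: int
    proof (cases "x \<ge> 0")
      case True then show ?thesis by (metis UnI1 rangeI zero_le_imp_eq_int)
    next
      case False then have "x = - int (nat (-x-1)) - 1" by simp
      then show ?thesis by (metis UnI2 rangeI)
    qed
    then show ?thesis by auto
  qed
  have i1: "inj (int)" by (simp add: inj_def)
  have i2: "inj (\<lambda>n::nat. - int n - 1)" by (simp add: inj_def)
  show s1: "(\<lambda>n. g (int n)) summable_on UNIV"
    using assms by (subst summable_on_UNIV_nonneg_real_iff) auto
  show s2: "(\<lambda>n. g (- int n - 1)) summable_on UNIV"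
    using assms by (subst summable_on_UNIV_nonneg_real_iff) auto
  have t1: "g summable_on range int" using s1 summable_on_reindex[OF i1, of g]
    by (simp add: o_def)
  have t2: "g summable_on range (\<lambda>n. - int n - 1)" using s2 summable_on_reindex[OF i2, of g]
    by (simp add: o_def)
  have d: "range int \<inter> range (\<lambda>n::nat. - int n - 1) = {}" by auto
  have "infsum g UNIV = infsum g (range int) + infsum g (range (\<lambda>n. - int n - 1))"
    by (subst U, rule infsum_Un_disjoint[OF t1 t2 d])
  also have "\<dots> = (\<Sum>\<^sub>\<infinity>n::nat. g (int n)) + (\<Sum>\<^sub>\<infinity>n::nat. g (- int n - 1))"
    by (simp add: infsum_reindex[OF i1] infsum_reindex[OF i2] o_def)
  also have "\<dots> = (\<Sum>\<^sub>\<infinity>n::nat. g (int n) + g (- int n - 1))"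
    by (rule infsum_add[OF s1 s2, symmetric])
  finally show "infsum g UNIV = (\<Sum>\<^sub>\<infinity>n::nat. g (int n) + g (- int n - 1))" .
qed

lemma f_split:
  assumes r: "r \<ge> 1"
  shows "f r x = (\<Sum>\<^sub>\<infinity>n::nat. h (x + real n) powr r + h (x - (real n + 1)) powr r)"
    "(\<lambda>n::nat. h (x + real n) powr r + h (x - (real n + 1)) powr r) summable_on UNIV"
proof -
  let ?g = "\<lambda>m::int. h (x + of_int m) powr r"
  have e: "?g (- int n - 1) = h (x - (real n + 1)) powr r" for n
    by (simp add: algebra_simps)
  have e2: "h (x - (real n + 1)) = h ((1 - x) + real n)" for n
    using h_even[of "(1 - x) + real n"] by (simp add: algebra_simps)
  have A: "summable (\<lambda>n. ?g (int n))" using h_summable_shift[OF r, of x] by simp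
  have B: "summable (\<lambda>n. ?g (- int n - 1))" unfolding e e2
    using h_summable_shift[OF r, of "1 - x"] by simp
  have N: "\<And>m. ?g m \<ge> 0" by simp
  note S = split_int[of ?g, OF A B N]
  show "f r x = (\<Sum>\<^sub>\<infinity>n::nat. h (x + real n) powr r + h (x - (real n + 1)) powr r)"
    unfolding f_def S(1) e by simp
  show "(\<lambda>n::nat. h (x + real n) powr r + h (x - (real n + 1)) powr r) summable_on UNIV"
    using summable_on_add[OF S(2) S(3)] unfolding e by simp
qed

theorem mainTheorem6:
  shows "\<forall>r::real. r \<ge> 1 \<longrightarrow>
           (\<forall>x::real. f r x \<ge> 2 powr (1 - r) * (\<Sum>\<^sub>\<infinity>m::nat. s m x powr r))
         \<and> f r (1/2) = 2 powr (1 - r) * (\<Sum>\<^sub>\<infinity>m::nat. s m (1/2) powr r)"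
proof (intro allI impI conjI)
  fix r x :: real assume r: "r \<ge> 1"
  note F = f_split[OF r, of x]
  have le: "2 powr (1 - r) * s m x powr r \<le> h (x + real m) powr r + h (x - (real m + 1)) powr r" for m
    unfolding s_def by (rule power_mean2[OF h_nonneg h_nonneg r])
  have sm: "(\<lambda>m. 2 powr (1 - r) * s m x powr r) summable_on UNIV"
    by (rule summable_on_comparison_test[OF F(2) le]) simp
  have "2 powr (1 - r) * (\<Sum>\<^sub>\<infinity>m::nat. s m x powr r) = (\<Sum>\<^sub>\<infinity>m::nat. 2 powr (1 - r) * s m x powr r)"
    by (rule infsum_cmult_right'[symmetric])
  also have "\<dots> \<le> f r x" unfolding F(1)
    by (rule infsum_mono[OF sm F(2) le])
  finally show "f r x \<ge> 2 powr (1 - r) * (\<Sum>\<^sub>\<infinity>m::nat. s m x powr r)" .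
next
  fix r :: real assume r: "r \<ge> 1"
  note F = f_split[OF r, of "1/2"]
  have eq: "h (1/2 + real m) powr r + h (1/2 - (real m + 1)) powr r = 2 powr (1 - r) * s m (1/2) powr r" for m
  proof -
    have hh: "h (1/2 - (real m + 1)) = h (1/2 + real m)"
      using h_even[of "1/2 + real m"] by (simp add: algebra_simps)
    have "s m (1/2) = 2 * h (1/2 + real m)" unfolding s_def hh by simp
    then have "2 powr (1 - r) * s m (1/2) powr r = 2 powr (1 - r) * 2 powr r * h (1/2 + real m) powr r"
      by (simp add: powr_mult h_nonneg)
    also have "\<dots> = 2 * h (1/2 + real m) powr r" by (simp add: powr_add[symmetric])
    finally show ?thesis using hh by simp
  qed
  have "f r (1/2) = (\<Sum>\<^sub>\<infinity>m::nat. 2 powr (1 - r) * s m (1/2) powr r)"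
    unfolding F(1) eq ..
  also have "\<dots> = 2 powr (1 - r) * (\<Sum>\<^sub>\<infinity>m::nat. s m (1/2) powr r)"
    by (rule infsum_cmult_right')
  finally show "f r (1/2) = 2 powr (1 - r) * (\<Sum>\<^sub>\<infinity>m::nat. s m (1/2) powr r)" .
qed

end
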